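(* Let $\alpha=\ln2/\ln3$ and $t_i=\dfrac{2^{\lfloor (i-1)/\alpha\rfloor}}{3^i}$ for $i\ge1$. Then $$\lim_{m\to\infty}\frac1m\sum_{i=1}^m t_i=\frac1\alpha\int_1^{1+\alpha}3^{-x}\,dx=\frac{1}{6\ln2}.$$
   Context: The numbers $t_i$ are the terms of the (divergent) series $-\Phi_{\mathbb{R}}(1c_\alpha)$, where $1c_\alpha=(\lceil(j+1)\alpha\rceil-\lceil j\alpha\rceil)_{j\ge0}$ and $\Phi_{\mathbb{R}}(w)=-\sum_{i\ge0}2^{d_i}/3^{i+1}$ for a word with $1$'s at positions $d_0<d_1<\cdots$. *)

theory Defs
  imports "HOL-Analysis.Analysis"
begin

definition alpha :: real where
  "alpha = ln 2 / ln 3"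

text \<open>t i = 2^(floor((i-1)/alpha)) / 3^i, for i >= 1. The floor is nonnegative for i >= 1.\<close>
definition t :: "nat \<Rightarrow> real" where
  "t i = 2 ^ nat \<lfloor>(real i - 1) / alpha\<rfloor> / 3 ^ i"

end

theory Submission imports Defs "HOL-Real_Asymp.Real_Asymp" begin


definition bet :: real where "bet = ln 3 / ln 2"
definition H :: "real \<Rightarrow> real" where "H x = 2 powr (- frac x)"

lemma H_periodic: "H (x + of_int n) = H x"
  by (simp add: H_def)

lemma H_bounds: "1/2 \<le> H x \<and> H x \<le> 1"
proof -
  have "2 powr (-1) \<le> H x" unfolding H_def
    by (intro powr_mono) (use frac_lt_1[of x] in auto)
  moreover have "H x \<le> 2 powr 0" unfolding H_def
    by (intro powr_mono) auto
  ultimately show ?thesis by (simp add: powr_minus)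
qed

lemma lip_aux: fixes x y :: real shows "0 \<le> x \<Longrightarrow> x \<le> y \<Longrightarrow> 2 powr (-x) - 2 powr (-y) \<le> y - x"
proof -
  assume x: "0 \<le> x" and xy: "x \<le> y"
  define d where "d = y - x"
  have d: "d \<ge> 0" using xy d_def by simp
  have e: "2 powr (-y) = 2 powr (-x) * 2 powr (-d)"
    by (simp add: d_def flip: powr_add)
  have "2 powr (-d) = exp (-d * ln 2)" by (simp add: powr_def)
  also have "\<dots> \<ge> 1 + (-d * ln 2)" by (rule exp_ge_add_one_self)
  finally have "1 - 2 powr (-d) \<le> d * ln 2" by simp
  also have "\<dots> \<le> d" using d ln_2_less_1 by (simp add: mult_left_le)
  finally have A: "1 - 2 powr (-d) \<le> d" .
  have B: "0 \<le> 1 - 2 powr (-d)" using d by (simp add: powr_minus_divide ge_one_powr_ge_zero)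
  have C: "2 powr (-x) \<le> 1" using x by (simp add: powr_minus_divide ge_one_powr_ge_zero)
  have "2 powr (-x) - 2 powr (-y) = 2 powr (-x) * (1 - 2 powr (-d))" using e by (simp add: algebra_simps)
  also have "\<dots> \<le> 1 * (1 - 2 powr (-d))" using B C by (intro mult_right_mono) auto
  also have "\<dots> \<le> d" using A by simp
  finally show ?thesis by (simp add: d_def)
qed

lemma lip: fixes x y :: real shows "0 \<le> x \<Longrightarrow> 0 \<le> y \<Longrightarrow> \<bar>2 powr (-x) - 2 powr (-y)\<bar> \<le> \<bar>x - y\<bar>"
proof (cases "x \<le> y")
  case True
  moreover assume "0 \<le> x" "0 \<le> y"
  ultimately show ?thesis using lip_aux[of x y] by (auto simp: abs_if)
next
  case False
  moreover assume "0 \<le> x" "0 \<le> y"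
  ultimately show ?thesis using lip_aux[of y x] by (auto simp: abs_if)
qed

lemma bet_irr: "bet \<notin> \<rat>"
proof
  assume "bet \<in> \<rat>"
  then obtain a b where ab: "bet = of_int a / of_int b" "b > 0" by (meson Rats_cases')
  have "bet > 0" unfolding bet_def by simp
  have "real_of_int a = bet * real_of_int b" using ab by (simp add: field_simps)
  with \<open>bet > 0\<close> ab(2) have "real_of_int a > 0" by simp
  hence "a > 0" by simp
  have "real_of_int b * ln 3 = real_of_int a * ln 2" using ab unfolding bet_def
    by (simp add: field_simps)
  hence "ln ((3::real) ^ nat b) = ln ((2::real) ^ nat a)"
    using \<open>a>0\<close> \<open>b>0\<close> by (simp add: ln_realpow)
  hence "(3::real) ^ nat b = 2 ^ nat a" by simp
  hence "(3::nat) ^ nat b = 2 ^ nat a" by (metis of_nat_eq_of_nat_power_cancel_iff of_nat_numeral)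
  hence "even ((3::nat) ^ nat b)" using \<open>a>0\<close> by simp
  thus False by simp
qed

lemma t_eq: "i \<ge> 1 \<Longrightarrow> t i = H ((real i - 1) * bet) / 3"
proof -
  assume i: "i \<ge> 1"
  define y where "y = (real i - 1) * bet"
  have y0: "y \<ge> 0" using i by (simp add: y_def bet_def)
  have ya: "(real i - 1) / alpha = y" by (simp add: y_def alpha_def bet_def)
  have fl: "\<lfloor>y\<rfloor> \<ge> 0" using y0 by simp
  have "(2::real) ^ nat \<lfloor>y\<rfloor> = 2 powr (real_of_int \<lfloor>y\<rfloor>)"
    using fl by (simp add: powr_realpow[symmetric])
  also have "\<dots> = 2 powr (y - frac y)" by (simp add: frac_def)
  also have "\<dots> = 2 powr y * H y" by (simp add: H_def powr_diff powr_minus divide_inverse)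
  also have "2 powr y = 3 ^ (i - 1)"
  proof -
    have "2 powr y = exp ((real i - 1) * ln 3)" by (simp add: powr_def y_def bet_def)
    also have "\<dots> = 3 powr (real (i - 1))" using i by (simp add: powr_def of_nat_diff)
    also have "\<dots> = 3 ^ (i - 1)" by (simp add: powr_realpow)
    finally show ?thesis .
  qed
  finally have "(2::real) ^ nat \<lfloor>y\<rfloor> = 3 ^ (i - 1) * H y" .
  moreover have "(3::real) ^ i = 3 * 3 ^ (i - 1)" using i
    by (metis Suc_diff_le diff_Suc_1 power_Suc)
  ultimately show ?thesis unfolding t_def ya y_def[symmetric] by simp
qed



lemma pw_le1: "0 \<le> c \<Longrightarrow> 2 powr (-c::real) \<le> 1"
  by (simp add: powr_minus_divide ge_one_powr_ge_zero)

lemma pointwise: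
  fixes q r :: nat and b e :: real
  assumes q: "q > 0" and r: "r < q" and b0: "0 \<le> b" and b1: "b < 1/q" and e: "\<bar>e\<bar> < 1/q"
  shows "\<bar>H (b + r/q + e) - 2 powr (-(b + r/q))\<bar> \<le> 1/q + (if r = 0 then 1 else 0) + (if r = q - 1 then 1 else 0)"
proof (cases "r = 0 \<or> r = q - 1")
  case True
  have c0: "0 \<le> b + r/q" using b0 by simp
  have "2 powr (-(b + r/q)) \<le> 1" using pw_le1[OF c0] .
  moreover have "2 powr (-(b + r/q)) > 0" by simp
  ultimately have "\<bar>H (b + r/q + e) - 2 powr (-(b + r/q))\<bar> \<le> 1" unfolding abs_le_iff using H_bounds[of "b + r/q + e"] by linarith
  moreover have "1 \<le> 1/q + (if r = 0 then 1 else 0) + (if r = q - 1 then 1 else (0::real))"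
    using True by (auto simp del: One_nat_def)
  ultimately show ?thesis by linarith
next
  case False
  hence r1: "1 \<le> r" "r + 2 \<le> q" using r by auto
  have l1: "1/q \<le> r/q" using r1 q by (simp add: divide_right_mono)
  have "real r + 2 \<le> real q" using r1 by linarith
  hence l2: "(r + 2)/q \<le> 1" using q by simp
  have "b + r/q + e < 1/q + r/q + 1/q" using b1 e by auto
  also have "\<dots> = (r+2)/q" by (simp add: add_divide_distrib)
  finally have u: "b + r/q + e < 1" using l2 by linarith
  have lo: "0 < b + r/q + e" using l1 e b0 by auto
  have "H (b + r/q + e) = 2 powr (-(b + r/q + e))" unfolding H_def using u lo by simp
  hence "\<bar>H (b + r/q + e) - 2 powr (-(b + r/q))\<bar> \<le> \<bar>(b + r/q + e) - (b + r/q)\<bar>"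
    using lip[of "b + r/q + e" "b + r/q"] lo b0 by simp
  then show ?thesis using e False by simp
qed

lemma block:
  fixes p :: int and q :: nat and a :: real
  assumes cop: "coprime p (int q)" and q: "q > 0" and dl: "\<bar>real q * bet - of_int p\<bar> < 1 / real q"
  shows "\<bar>(\<Sum>k<q. H (a + real k * bet)) - 2 powr (- (frac (real q * a) / real q)) * (\<Sum>r<q. 2 powr (- (real r / real q)))\<bar> \<le> 3"
proof -
  define n where "n = \<lfloor>real q * a\<rfloor>"
  define b where "b = frac (real q * a) / real q"
  define \<delta> where "\<delta> = real q * bet - of_int p"
  define g where "g k = nat ((n + int k * p) mod int q)" for k
  define E where "E r = (1 / real q + (if r = 0 then 1 else 0) + (if r = q - 1 then 1 else 0) :: real)" for r :: nat
  have b0: "0 \<le> b" using q by (simp add: b_def)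
  have b1: "b < 1 / real q" using q frac_lt_1[of "real q * a"] by (simp add: b_def divide_strict_right_mono)
  have qa: "real q * a = of_int n + real q * b" using q by (simp add: n_def b_def frac_def)
  have g_lt: "g k < q" for k using q by (simp add: g_def nat_less_iff)
  have inj: "inj_on g {..<q}"
  proof
    fix k k' assume k: "k \<in> {..<q}" and k': "k' \<in> {..<q}" and e: "g k = g k'"
    have "(n + int k * p) mod int q = (n + int k' * p) mod int q"
      using e q unfolding g_def by (simp add: eq_nat_nat_iff)
    hence "int q dvd (n + int k * p) - (n + int k' * p)" by (simp add: mod_eq_dvd_iff)
    hence "int q dvd (int k - int k') * p" by (simp add: algebra_simps)
    hence d: "int q dvd (int k - int k')" using cop by (simp add: coprime_dvd_mult_left_iff coprime_commute)
    have lt: "\<bar>int k - int k'\<bar> < int q" using k k' by auto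
    show "k = k'"
    proof (rule ccontr)
      assume "k \<noteq> k'"
      hence "int k - int k' \<noteq> 0" by simp
      from dvd_imp_le_int[OF this d] lt show False by simp
    qed
  qed
  have img: "g ` {..<q} = {..<q}" by (rule endo_inj_surj) (use g_lt inj in auto)
  have reidx: "(\<Sum>k<q. f (g k)) = (\<Sum>r<q. f r)" for f :: "nat \<Rightarrow> real"
    using sum.reindex[OF inj, of f] img by simp
  have pt: "a + real k * bet = of_int ((n + int k * p) div int q) + (b + real (g k) / real q + real k * \<delta> / real q)" for k
  proof -
    have gm: "int (g k) = (n + int k * p) mod int q" using q by (simp add: g_def)
    have dm: "n + int k * p = int q * ((n + int k * p) div int q) + int (g k)"
      unfolding gm by simp
    hence dmr: "of_int n + real k * of_int p = real q * of_int ((n + int k * p) div int q) + real (g k)"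
      by (metis of_int_add of_int_mult of_int_of_nat_eq)
    have aa: "a = (of_int n + real q * b) / real q" using qa q by (simp add: field_simps)
    have bb: "bet = (of_int p + \<delta>) / real q" using q by (simp add: \<delta>_def field_simps)
    have "a + real k * bet = (of_int n + real k * of_int p)/q + b + real k*\<delta>/q"
      unfolding aa bb using q by (simp add: field_simps)
    also have "\<dots> = of_int ((n + int k * p) div int q) + (b + real (g k) / real q + real k * \<delta> / real q)"
      unfolding dmr using q by (simp add: field_simps)
    finally show ?thesis .
  qed
  have ek: "\<bar>real k * \<delta> / real q\<bar> < 1 / real q" if "k < q" for k
  proof -
    have "\<bar>real k * \<delta> / real q\<bar> = real k / real q * \<bar>\<delta>\<bar>" by (simp add: abs_mult)
    also have "\<dots> \<le> 1 * \<bar>\<delta>\<bar>" using that by (intro mult_right_mono) auto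
    finally show ?thesis using dl by (simp add: \<delta>_def)
  qed
  have Hk: "H (a + real k * bet) = H (b + real (g k) / real q + real k * \<delta> / real q)" for k
    unfolding pt by (metis H_periodic add.commute)
  have each: "\<bar>H (a + real k * bet) - 2 powr (-(b + real (g k) / real q))\<bar> \<le> E (g k)" if "k < q" for k
    unfolding Hk E_def by (rule pointwise) (use q g_lt b0 b1 ek that in auto)
  have "\<bar>(\<Sum>k<q. H (a + real k * bet)) - (\<Sum>k<q. 2 powr (-(b + real (g k) / real q)))\<bar>
        = \<bar>\<Sum>k<q. H (a + real k * bet) - 2 powr (-(b + real (g k) / real q))\<bar>"
    by (simp add: sum_subtractf)
  also have "\<dots> \<le> (\<Sum>k<q. \<bar>H (a + real k * bet) - 2 powr (-(b + real (g k) / real q))\<bar>)"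
    by (rule sum_abs)
  also have "\<dots> \<le> (\<Sum>k<q. E (g k))" by (rule sum_mono) (use each in auto)
  also have "\<dots> = (\<Sum>r<q. E r)" by (rule reidx)
  also have "\<dots> = 3" using q by (simp add: E_def sum.distrib)
  finally have A: "\<bar>(\<Sum>k<q. H (a + real k * bet)) - (\<Sum>k<q. 2 powr (-(b + real (g k) / real q)))\<bar> \<le> 3" .
  have "(\<Sum>k<q. 2 powr (-(b + real (g k) / real q))) = (\<Sum>r<q. 2 powr (-(b + real r / real q)))"
    by (rule reidx[of "\<lambda>r. 2 powr (-(b + real r / real q))"])
  also have "\<dots> = 2 powr (-b) * (\<Sum>r<q. 2 powr (- (real r / real q)))"
    by (simp add: sum_distrib_left powr_add[symmetric])
  finally show ?thesis using A by (simp add: b_def)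
qed



definition S :: "nat \<Rightarrow> real" where "S m = (\<Sum>j<m. H (real j * bet))"
definition I0 :: real where "I0 = 1 / (2 * ln 2)"

lemma sum_split: "(\<Sum>j<m+n. f j) = (\<Sum>j<m. f j) + (\<Sum>k<n. f (m + k))" for f :: "nat \<Rightarrow> real"
  by (induction n) (auto simp: add_ac)

lemma geom:
  assumes q: "q > 0"
  shows "(\<Sum>r<q. 2 powr (- (real r / real q))) = (1/2) / (1 - 2 powr (-1/real q))"
proof -
  define x where "x = 2 powr (-1/real q)"
  have xr: "2 powr (- (real r / real q)) = x ^ r" for r
    unfolding x_def by (simp add: powr_realpow[symmetric] powr_powr)
  have x1: "x < 1" unfolding x_def using q by (simp add: powr_less_one)
  have xq: "x ^ q = 1/2" unfolding x_def[symmetric] xr[of q, symmetric] using q by (simp add: powr_minus)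
  have "(\<Sum>r<q. 2 powr (- (real r / real q))) = (1 - x^q)/(1-x)" using x1 by (simp add: xr sum_gp_strict)
  also have "\<dots> = (1/2) / (1 - x)" by (simp only: xq) simp
  finally show ?thesis unfolding x_def .
qed

lemma I0_pos: "I0 > 0" by (simp add: I0_def)

lemma main_lim: "(\<lambda>m. S m / real m) \<longlonglongrightarrow> I0"
proof (rule LIMSEQ_I)
  fix \<epsilon> :: real assume \<epsilon>: "\<epsilon> > 0"
  define s where "s q = (1/2) / (real q * (1 - 2 powr (-1/real q)))" for q :: nat
  have "s \<longlonglongrightarrow> inverse (ln 2) / 2" unfolding s_def by real_asymp
  hence L1: "s \<longlonglongrightarrow> I0" by (simp add: I0_def field_simps)
  have L2: "(\<lambda>q::nat. 1 - 2 powr (-1/real q)) \<longlonglongrightarrow> 0" by real_asymp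
  have L3: "(\<lambda>q::nat. 3 / real q) \<longlonglongrightarrow> 0" by real_asymp
  have e4: "\<epsilon>/4 > 0" using \<epsilon> by simp
  have "eventually (\<lambda>q. dist (s q) I0 < \<epsilon>/4) sequentially" using tendstoD[OF L1 e4] .
  moreover have "eventually (\<lambda>q. dist (1 - 2 powr (-1/real q)) 0 < \<epsilon>/4) sequentially" using tendstoD[OF L2 e4] .
  moreover have "eventually (\<lambda>q. dist (3 / real q) 0 < \<epsilon>/4) sequentially" using tendstoD[OF L3 e4] .
  moreover have "eventually (\<lambda>q::nat. q > 0) sequentially" by (rule eventually_gt_at_top)
  ultimately have "eventually (\<lambda>q. dist (s q) I0 < \<epsilon>/4 \<and> dist (1 - 2 powr (-1/real q)) 0 < \<epsilon>/4
      \<and> dist (3 / real q) 0 < \<epsilon>/4 \<and> q > 0) sequentially"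
    by eventually_elim auto
  then obtain Q where Q: "\<And>q. q \<ge> Q \<Longrightarrow> dist (s q) I0 < \<epsilon>/4 \<and> dist (1 - 2 powr (-1/real q)) 0 < \<epsilon>/4
      \<and> dist (3 / real q) 0 < \<epsilon>/4 \<and> q > 0"
    by (auto simp: eventually_sequentially)
  have "infinite (approx_set bet)" using bet_irr rational_iff_finite_approx_set by blast
  then obtain p k where pk: "(p,k) \<in> approx_set bet" "k > int Q" using infinite_approx_set by blast
  define q where "q = nat k"
  have kq: "k = int q" and Qq: "q \<ge> Q" using pk(2) by (auto simp: q_def)
  have cop: "coprime p (int q)" and ap: "\<bar>bet - of_int p / real q\<bar> < 1 / (real q)\<^sup>2"
    using pk(1) unfolding approx_set_def kq by auto
  obtain sq: "dist (s q) I0 < \<epsilon>/4" and tq: "dist (1 - 2 powr (-1/real q)) 0 < \<epsilon>/4"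
    and thq: "dist (3 / real q) 0 < \<epsilon>/4" and q0: "q > 0" using Q[OF Qq] by blast
  have dl: "\<bar>real q * bet - of_int p\<bar> < 1 / real q"
  proof -
    have "\<bar>real q * bet - of_int p\<bar> = real q * \<bar>bet - of_int p / real q\<bar>"
      using q0 by (simp add: abs_mult[symmetric] field_simps)
    also have "\<dots> < real q * (1 / (real q)\<^sup>2)" using ap q0 by (intro mult_strict_left_mono) auto
    also have "\<dots> = 1 / real q" by (simp add: power2_eq_square)
    finally show ?thesis .
  qed
  define \<Sigma> where "\<Sigma> = (\<Sum>r<q. 2 powr (- (real r / real q)))"
  have \<Sigma>s: "\<Sigma> = real q * s q" unfolding \<Sigma>_def s_def using geom[OF q0] q0 by simp
  have \<Sigma>le: "\<Sigma> \<le> real q"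
  proof -
    have "\<Sigma> \<le> (\<Sum>r<q. 1)" unfolding \<Sigma>_def by (rule sum_mono) (simp add: pw_le1)
    thus ?thesis by simp
  qed
  have \<Sigma>ge: "\<Sigma> \<ge> 0" unfolding \<Sigma>_def by (rule sum_nonneg) simp
  have blk: "\<bar>(\<Sum>k<q. H (a + real k * bet)) - real q * I0\<bar> \<le> real q * (3*\<epsilon>/4)" for a
  proof -
    define fb where "fb = frac (real q * a) / real q"
    have fb0: "0 \<le> fb" using q0 by (simp add: fb_def)
    have fb1: "fb \<le> 1 / real q" using q0 frac_lt_1[of "real q * a"] by (simp add: fb_def divide_right_mono)
    have c1: "2 powr (-fb) \<le> 1" using pw_le1[OF fb0] .
    have c2: "2 powr (-1/real q) \<le> 2 powr (-fb)" using fb1 by (intro powr_mono) auto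
    have "\<bar>(1 - 2 powr (-1/real q)) - 0\<bar> < \<epsilon>/4" using tq by (simp only: dist_real_def)
    hence c3: "\<bar>2 powr (-fb) - 1\<bar> < \<epsilon>/4" using c1 c2 unfolding abs_less_iff by linarith
    have "\<bar>2 powr (-fb) * \<Sigma> - real q * I0\<bar> = \<bar>(2 powr (-fb) - 1) * \<Sigma> + real q * (s q - I0)\<bar>"
      using \<Sigma>s by (simp add: algebra_simps)
    also have "\<dots> \<le> \<bar>2 powr (-fb) - 1\<bar> * \<Sigma> + real q * \<bar>s q - I0\<bar>"
      using \<Sigma>ge by (simp add: abs_mult abs_triangle_ineq[THEN order_trans])
    also have "\<dots> \<le> (\<epsilon>/4) * real q + real q * (\<epsilon>/4)"
      using c3 sq \<Sigma>le \<Sigma>ge \<epsilon> by (intro add_mono mult_mono mult_left_mono) (auto simp: dist_real_def)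
    finally have A: "\<bar>2 powr (-fb) * \<Sigma> - real q * I0\<bar> \<le> real q * (\<epsilon>/2)" by (simp add: mult.commute)
    have B: "\<bar>(\<Sum>k<q. H (a + real k * bet)) - 2 powr (-fb) * \<Sigma>\<bar> \<le> 3"
      using block[OF cop q0 dl, of a] unfolding fb_def \<Sigma>_def by simp
    have "3 \<le> real q * (\<epsilon>/4)" using thq q0 by (simp add: dist_real_def field_simps)
    with A B show ?thesis by linarith
  qed
  have blocks: "\<bar>S (l*q) - real (l*q) * I0\<bar> \<le> real (l*q) * (3*\<epsilon>/4)" for l
  proof (induction l)
    case 0 then show ?case by (simp add: S_def)
  next
    case (Suc l)
    have "S (Suc l * q) = S (l*q + q)" by (simp add: add.commute)
    also have "\<dots> = S(l*q) + (\<Sum>k<q. H (real (l*q + k) * bet))" unfolding S_def by (rule sum_split)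
    also have "\<dots> = S (l*q) + (\<Sum>k<q. H (real (l*q) * bet + real k * bet))" by (simp add: algebra_simps)
    finally have "S (Suc l * q) = S (l*q) + (\<Sum>k<q. H (real (l*q) * bet + real k * bet))" .
    hence "S (Suc l * q) - real (Suc l * q) * I0 = (S (l*q) - real (l*q) * I0) + ((\<Sum>k<q. H (real (l*q) * bet + real k * bet)) - real q * I0)"
      by (simp add: algebra_simps)
    moreover note blk[of "real (l*q) * bet"] Suc.IH
    ultimately have "\<bar>S (Suc l * q) - real (Suc l * q) * I0\<bar> \<le> real (l*q) * (3*\<epsilon>/4) + real q * (3*\<epsilon>/4)"
      by (smt (verit))
    thus ?case by (simp add: algebra_simps)
  qed
  have Hb: "\<bar>H x - I0\<bar> \<le> 1 + I0" for x using H_bounds[of x] I0_pos by (simp add: abs_le_iff)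
  define M where "M = nat \<lceil>4 * real q * (1 + I0) / \<epsilon>\<rceil> + 1"
  show "\<exists>no. \<forall>m\<ge>no. norm (S m / real m - I0) < \<epsilon>"
  proof (intro exI allI impI)
    fix m assume mM: "m \<ge> M"
    define l where "l = m div q"
    define r where "r = m mod q"
    have m: "m = l*q + r" by (simp add: l_def r_def)
    have rq: "r < q" using q0 by (simp add: r_def)
    have m0: "real m > 0" using mM by (simp add: M_def)
    have mbig: "real m > 4 * real q * (1 + I0) / \<epsilon>"
    proof -
      have "4 * real q * (1 + I0) / \<epsilon> \<le> real (nat \<lceil>4 * real q * (1 + I0) / \<epsilon>\<rceil>)" by linarith
      also have "\<dots> < real M" by (simp add: M_def)
      also have "\<dots> \<le> real m" using mM by simp
      finally show ?thesis .
    qed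
    have Sm: "S m - real m * I0 = (S (l*q) - real (l*q) * I0) + (\<Sum>k<r. H (real (l*q + k) * bet) - I0)"
      unfolding m S_def sum_split by (simp add: sum_subtractf algebra_simps)
    have R: "\<bar>\<Sum>k<r. H (real (l*q + k) * bet) - I0\<bar> \<le> real q * (1 + I0)"
    proof -
      have "\<bar>\<Sum>k<r. H (real (l*q + k) * bet) - I0\<bar> \<le> (\<Sum>k<r. \<bar>H (real (l*q + k) * bet) - I0\<bar>)" by (rule sum_abs)
      also have "\<dots> \<le> (\<Sum>k<r. 1 + I0)" by (rule sum_mono) (rule Hb)
      also have "\<dots> = real r * (1 + I0)" by simp
      also have "\<dots> \<le> real q * (1 + I0)" using rq I0_pos by (intro mult_right_mono) auto
      finally show ?thesis .
    qed
    have lqm: "real (l*q) \<le> real m" unfolding m by simp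
    have tri: "\<bar>S m - real m * I0\<bar> \<le> \<bar>S (l*q) - real (l*q) * I0\<bar> + \<bar>\<Sum>k<r. H (real (l*q + k) * bet) - I0\<bar>"
      unfolding Sm by (rule abs_triangle_ineq)
    have "real (l*q) * (3*\<epsilon>/4) \<le> real m * (3*\<epsilon>/4)" using lqm \<epsilon> by (intro mult_right_mono) auto
    hence "\<bar>S m - real m * I0\<bar> \<le> real m * (3*\<epsilon>/4) + real q * (1 + I0)"
      using tri R blocks[of l] by linarith
    moreover have "real q * (1 + I0) < real m * (\<epsilon>/4)" using mbig \<epsilon> by (simp add: field_simps)
    ultimately have "\<bar>S m - real m * I0\<bar> < real m * \<epsilon>" by linarith
    moreover have "S m / real m - I0 = (S m - real m * I0) / real m" using m0 by (simp add: field_simps)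
    ultimately show "norm (S m / real m - I0) < \<epsilon>" using m0 by (simp add: abs_divide pos_divide_less_eq mult.commute)
  qed
qed



lemma alpha_pos: "alpha > 0" by (simp add: alpha_def)

lemma integral_val: "(1 / alpha) * integral {1..1+alpha} (\<lambda>x. 3 powr (-x)) = 1 / (6 * ln 2)"
proof -
  define f where "f x = - (3 powr (-x)) / ln 3" for x :: real
  have d: "(f has_vector_derivative 3 powr (-x)) (at x within {1..1+alpha})" for x
  proof -
    have "(f has_real_derivative 3 powr (-x)) (at x)"
      unfolding f_def by (auto intro!: derivative_eq_intros simp: powr_minus)
    thus ?thesis by (simp add: has_real_derivative_iff_has_vector_derivative has_vector_derivative_at_within)
  qed
  have "((\<lambda>x. 3 powr (-x)) has_integral (f (1+alpha) - f 1)) {1..1+alpha}"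
    using alpha_pos by (intro fundamental_theorem_of_calculus d) auto
  hence I: "integral {1..1+alpha} (\<lambda>x. 3 powr (-x)) = f (1+alpha) - f 1" by (rule integral_unique)
  have a3: "3 powr alpha = 2" by (simp add: powr_def alpha_def)
  have "3 powr (1+alpha) = (6::real)" by (simp add: powr_add a3)
  hence "3 powr (-(1+alpha)) = (1/3) * (1/2)"
    unfolding powr_minus by simp
  hence "f (1+alpha) - f 1 = (1/6) / ln 3" by (simp add: f_def field_simps)
  moreover have "(1 / alpha) * ((1/6) / ln 3) = 1 / (6 * ln 2)" by (simp add: alpha_def field_simps)
  ultimately show ?thesis unfolding I by simp
qed

lemma sum_t: "(\<Sum>i=1..m. t i) = S m / 3"
proof -
  have "(\<Sum>i=1..m. t i) = (\<Sum>j<m. t (Suc j))" by (simp add: sum.atLeast1_atMost_eq)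
  also have "\<dots> = (\<Sum>j<m. H (real j * bet) / 3)" by (rule sum.cong) (auto simp: t_eq)
  also have "\<dots> = S m / 3" by (simp add: S_def sum_divide_distrib)
  finally show ?thesis .
qed

theorem lemma41:
  shows "(\<lambda>m. (\<Sum>i=1..m. t i) / real m) \<longlonglongrightarrow> (1 / alpha) * integral {1..1+alpha} (\<lambda>x. 3 powr (-x))
         \<and> (1 / alpha) * integral {1..1+alpha} (\<lambda>x. 3 powr (-x)) = 1 / (6 * ln 2)"
proof
  have "(\<lambda>m. (S m / real m) / 3) \<longlonglongrightarrow> I0 / 3" by (intro tendsto_divide main_lim) auto
  moreover have "(\<lambda>m. (\<Sum>i=1..m. t i) / real m) = (\<lambda>m. (S m / real m) / 3)"
  proof (rule ext)
    fix m show "(\<Sum>i=1..m. t i) / real m = (S m / real m) / 3" unfolding sum_t by simp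
  qed
  moreover have "I0 / 3 = (1 / alpha) * integral {1..1+alpha} (\<lambda>x. 3 powr (-x))"
    unfolding integral_val by (simp add: I0_def)
  ultimately show "(\<lambda>m. (\<Sum>i=1..m. t i) / real m) \<longlonglongrightarrow> (1 / alpha) * integral {1..1+alpha} (\<lambda>x. 3 powr (-x))"
    by simp
  show "(1 / alpha) * integral {1..1+alpha} (\<lambda>x. 3 powr (-x)) = 1 / (6 * ln 2)" by (rule integral_val)
qed


end
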